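(* Let $\Pi\subset\mathbb R^2$ be a convex polygon with counterclockwise extreme points $\mathbf v_1,\dots,\mathbf v_n$. For $\mathbf x\in\Pi$ let $D(\mathbf x)\in\mathbb R^{n-1}$ be the G$-$W discrepancy vector with $i$-th coordinate $q(\mathbf x,\mathbf v_i)-w(\mathbf x,\mathbf v_i)$ for $1\le i<n$, where $q$ denotes Gibbs coordinates and $w$ Wachspress coordinates. Then there is a linear subspace of $\mathbb R^{n-1}$ of dimension $n-3$ containing $D(\mathbf x)$ for every $\mathbf x\in\Pi$.
   Context: Gibbs coordinates of $\mathbf x$: the unique probability distribution $(q(\mathbf x,\mathbf v_i))_i$ with $\sum_i q(\mathbf x,\mathbf v_i)\mathbf v_i=\mathbf x$ maximizing the entropy $-\sum_i q\log q$ ($0\log0=0$). Wachspress coordinates: with $A(\mathbf p,\mathbf q,\mathbf r)=\tfrac12\det[\mathbf q-\mathbf p,\mathbf r-\mathbf p]$ and indices mod $n$, for interior $\mathbf x$ set $w_i(\mathbf x)=A(\mathbf v_{i-1},\mathbf v_i,\mathbf v_{i+1})/(A(\mathbf v_{i-1},\mathbf v_i,\mathbf x)A(\mathbf x,\mathbf v_i,\mathbf v_{i+1}))$ and $w(\mathbf x,\mathbf v_i)=w_i(\mathbf x)/\sum_jw_j(\mathbf x)$; for $\mathbf x$ on an edge $[\mathbf v_j,\mathbf v_{j+1}]$ they are the barycentric coordinates of $\mathbf x$ with respect to $\mathbf v_j,\mathbf v_{j+1}$ and $0$ elsewhere. Both systems satisfy $\sum_i c_i\mathbf v_i=\mathbf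 x$, $\sum_ic_i=1$. *)

theory Defs
  imports "HOL-Analysis.Analysis" "HOL-Library.Function_Algebras"
begin

(* Real vector space structure on functions (pointwise); used to model R^(n-1)
   as the functions nat => real supported on {..<n-1}. *)
instantiation "fun" :: (type, real_vector) real_vector
begin
definition scaleR_fun :: "real \<Rightarrow> ('a \<Rightarrow> 'b) \<Rightarrow> 'a \<Rightarrow> 'b"
  where "scaleR_fun r f = (\<lambda>x. r *\<^sub>R f x)"
instance
  by standard (auto simp: scaleR_fun_def fun_eq_iff plus_fun_def fun_diff_def fun_Compl_def zero_fun_def scaleR_add_right scaleR_add_left)
end

(* points of the plane: real \<times> real; vertices indexed 0..n-1, indices mod n *)

definition tri_area :: "real \<times> real \<Rightarrow> real \<times> real \<Rightarrow> real \<times> real \<Rightarrow> real" where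
  "tri_area p q r = ((fst q - fst p) * (snd r - snd p) - (snd q - snd p) * (fst r - fst p)) / 2"

definition nxt :: "nat \<Rightarrow> nat \<Rightarrow> nat" where "nxt n i = Suc i mod n"
definition prv :: "nat \<Rightarrow> nat \<Rightarrow> nat" where "prv n i = (i + n - 1) mod n"

definition polygon :: "(nat \<Rightarrow> real \<times> real) \<Rightarrow> nat \<Rightarrow> (real \<times> real) set" where
  "polygon v n = convex hull (v ` {..<n})"

(* v 0, ..., v (n-1) are the extreme points of the convex polygon, listed counterclockwise:
   every other vertex lies strictly to the left of each directed edge [v i, v (i+1)]. *)
definition ccw_convex_polygon :: "(nat \<Rightarrow> real \<times> real) \<Rightarrow> nat \<Rightarrow> bool" where
  "ccw_convex_polygon v n \<longleftrightarrow> 3 \<le> n \<and> inj_on v {..<n}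
     \<and> {p. p extreme_point_of polygon v n} = v ` {..<n}
     \<and> (\<forall>i<n. \<forall>j<n. j \<noteq> i \<and> j \<noteq> nxt n i \<longrightarrow> tri_area (v i) (v (nxt n i)) (v j) > 0)"

definition coord_feasible :: "(nat \<Rightarrow> real \<times> real) \<Rightarrow> nat \<Rightarrow> real \<times> real \<Rightarrow> (nat \<Rightarrow> real) set" where
  "coord_feasible v n x = {c. (\<forall>i<n. 0 \<le> c i) \<and> (\<forall>i\<ge>n. c i = 0) \<and> (\<Sum>i<n. c i) = 1
        \<and> (\<Sum>i<n. c i *\<^sub>R v i) = x}"

definition entropy :: "nat \<Rightarrow> (nat \<Rightarrow> real) \<Rightarrow> real" where
  "entropy n c = - (\<Sum>i<n. if c i = 0 then 0 else c i * ln (c i))"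

definition gibbs :: "(nat \<Rightarrow> real \<times> real) \<Rightarrow> nat \<Rightarrow> real \<times> real \<Rightarrow> nat \<Rightarrow> real" where
  "gibbs v n x = (THE q. q \<in> coord_feasible v n x \<and>
                    (\<forall>p \<in> coord_feasible v n x. entropy n p \<le> entropy n q))"

definition wach_weight :: "(nat \<Rightarrow> real \<times> real) \<Rightarrow> nat \<Rightarrow> real \<times> real \<Rightarrow> nat \<Rightarrow> real" where
  "wach_weight v n x i = tri_area (v (prv n i)) (v i) (v (nxt n i))
     / (tri_area (v (prv n i)) (v i) x * tri_area x (v i) (v (nxt n i)))"

definition wach_boundary :: "(nat \<Rightarrow> real \<times> real) \<Rightarrow> nat \<Rightarrow> real \<times> real \<Rightarrow> nat \<Rightarrow> real" where
  "wach_boundary v n x =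
     (let j = (SOME j. j < n \<and> x \<in> closed_segment (v j) (v (nxt n j)));
          t = (THE t. 0 \<le> t \<and> t \<le> 1 \<and> x = (1 - t) *\<^sub>R v j + t *\<^sub>R v (nxt n j))
      in (\<lambda>k. if k = j then 1 - t else if k = nxt n j then t else 0))"

definition wachspress :: "(nat \<Rightarrow> real \<times> real) \<Rightarrow> nat \<Rightarrow> real \<times> real \<Rightarrow> nat \<Rightarrow> real" where
  "wachspress v n x =
     (if x \<in> interior (polygon v n)
      then (\<lambda>i. if i < n then wach_weight v n x i / (\<Sum>j<n. wach_weight v n x j) else 0)
      else wach_boundary v n x)"

(* G-W discrepancy vector in R^(n-1): coordinates 0..n-2 (paper's 1..n-1), zero beyond *)
definition gw_discrepancy :: "(nat \<Rightarrow> real \<times> real) \<Rightarrow> nat \<Rightarrow> real \<times> real \<Rightarrow> nat \<Rightarrow> real" where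
  "gw_discrepancy v n x = (\<lambda>i. if i < n - 1 then gibbs v n x i - wachspress v n x i else 0)"

(* R^(n-1) as functions supported on {..<n-1} *)
definition Rn :: "nat \<Rightarrow> (nat \<Rightarrow> real) set" where
  "Rn m = {f. \<forall>i\<ge>m. f i = 0}"

end

theory Submission imports Defs "HOL-Real_Asymp.Real_Asymp"
begin


definition xlnx :: "real \<Rightarrow> real" where "xlnx t = (if t \<le> 0 then 0 else t * ln t)"

lemma isCont_xlnx: "isCont xlnx t"
proof -
  consider "t < 0" | "t = 0" | "t > 0" by linarith
  then show ?thesis
  proof cases
    case 1
    have "eventually (\<lambda>s. xlnx s = 0) (nhds t)"
      using eventually_nhds_in_open[of "{..<0}" t] 1 by (auto elim!: eventually_mono simp: xlnx_def)
    then have "isCont xlnx t \<longleftrightarrow> isCont (\<lambda>s. 0::real) t" by (rule isCont_cong)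
    then show ?thesis by simp
  next
    case 3
    have "eventually (\<lambda>s. xlnx s = s * ln s) (nhds t)"
      using eventually_nhds_in_open[of "{0<..}" t] 3 by (auto elim!: eventually_mono simp: xlnx_def)
    moreover have "isCont (\<lambda>s. s * ln s) t" using 3 by (intro continuous_intros) auto
    ultimately show ?thesis using isCont_cong[of xlnx "\<lambda>s. s * ln s" t] by simp
  next
    case 2
    have l: "((\<lambda>s. s * ln s) \<longlongrightarrow> 0) (at_right (0::real))" by real_asymp
    have e: "eventually (\<lambda>s. s * ln s = xlnx s) (at_right (0::real))"
      using eventually_at_right_less[of "0::real"] by (auto elim!: eventually_mono simp: xlnx_def)
    have r: "(xlnx \<longlongrightarrow> 0) (at_right 0)"
      by (rule Lim_transform_eventually[OF l e])
    have "eventually (\<lambda>s. s \<in> {-1<..<0}) (at_left (0::real))"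
      by (rule eventually_at_left_real) simp
    then have "eventually (\<lambda>s. s < 0) (at_left (0::real))"
      by (auto elim: eventually_mono)
    then have e2: "eventually (\<lambda>s. 0 = xlnx s) (at_left (0::real))"
      by (auto elim!: eventually_mono simp: xlnx_def)
    have lft: "(xlnx \<longlongrightarrow> 0) (at_left 0)"
      by (rule Lim_transform_eventually[OF tendsto_const e2])
    have "(xlnx \<longlongrightarrow> 0) (at 0)" by (rule filterlim_split_at[OF lft r])
    then show ?thesis using 2 by (simp add: isCont_def xlnx_def)
  qed
qed

lemma xlnx_mid:
  assumes "a \<ge> 0" "b \<ge> 0" "a \<noteq> b"
  shows "xlnx a + xlnx b > 2 * xlnx ((a+b)/2)"
proof -
  define m where "m = (a+b)/2"
  have m: "m > 0" "a \<noteq> m" "b \<noteq> m" using assms by (auto simp: m_def)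
  have key: "xlnx c - c * ln m > c - m" if "c \<ge> 0" "c \<noteq> m" for c
  proof (cases "c = 0")
    case True then show ?thesis using m by (simp add: xlnx_def)
  next
    case False
    then have c: "c > 0" using that by simp
    have "ln (m/c) < m/c - 1"
      using ln_le_minus_one[of "m/c"] ln_eq_minus_one[of "m/c"] c m that by force
    then have "c * ln (m/c) < c * (m/c - 1)" using c by simp
    moreover have "ln (m/c) = ln m - ln c" using c m by (simp add: ln_div)
    ultimately have "c * ln m - c * ln c < m - c" using c by (simp add: algebra_simps)
    then show ?thesis using c by (simp add: xlnx_def)
  qed
  have "xlnx a + xlnx b - (a+b) * ln m > (a - m) + (b - m)"
    using key[of a] key[of b] assms m by (simp add: algebra_simps)
  then show ?thesis using m by (simp add: m_def xlnx_def field_simps)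
qed

lemma xlnx_mid_le:
  assumes "a \<ge> 0" "b \<ge> 0"
  shows "2 * xlnx ((a+b)/2) \<le> xlnx a + xlnx b"
  using xlnx_mid[OF assms] by (cases "a = b") auto

lemma cont_coord[continuous_intros]: "continuous_on S (\<lambda>c::nat\<Rightarrow>real. c i)"
  by (rule continuous_on_subset[OF continuous_on_product_coordinates]) simp

lemma cont_xlnx_coord[continuous_intros]: "continuous_on S (\<lambda>c::nat\<Rightarrow>real. xlnx (c i))"
proof -
  have "continuous_on UNIV xlnx" by (simp add: continuous_at_imp_continuous_on isCont_xlnx)
  then show ?thesis using continuous_on_compose2[OF _ cont_coord[of S i], of UNIV xlnx] by auto
qed

lemma entropy_feasible:
  assumes "c \<in> coord_feasible v n x"
  shows "entropy n c = - (\<Sum>i<n. xlnx (c i))"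
  using assms unfolding entropy_def coord_feasible_def xlnx_def
  by (intro arg_cong[where f=uminus] sum.cong) auto

lemma compact_feasible: "compact (coord_feasible v n x)"
proof -
  define S where "S = (\<lambda>i::nat. if i < n then {0..1::real} else {0})"
  have "compactin (product_topology (\<lambda>i. euclidean) UNIV) (PiE UNIV S)"
    unfolding compactin_PiE by (auto simp: S_def)
  then have K: "compact (PiE UNIV S)"
    by (simp add: euclidean_product_topology)
  have c1: "closed {c::nat\<Rightarrow>real. (\<Sum>i<n. c i) = 1}"
    by (rule closed_Collect_eq) (intro continuous_intros)+
  have c2: "closed {c::nat\<Rightarrow>real. (\<Sum>i<n. c i *\<^sub>R v i) = x}"
    by (rule closed_Collect_eq) (intro continuous_intros)+
  have eq: "coord_feasible v n x = PiE UNIV S \<inter> {c. (\<Sum>i<n. c i) = 1} \<inter> {c. (\<Sum>i<n. c i *\<^sub>R v i) = x}"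
  proof (intro equalityI subsetI)
    fix c assume c: "c \<in> coord_feasible v n x"
    have "c i \<le> 1" if "i < n" for i
    proof -
      have "c i \<le> (\<Sum>j<n. c j)"
        by (rule member_le_sum) (use c that in \<open>auto simp: coord_feasible_def\<close>)
      then show ?thesis using c by (simp add: coord_feasible_def)
    qed
    then show "c \<in> PiE UNIV S \<inter> {c. (\<Sum>i<n. c i) = 1} \<inter> {c. (\<Sum>i<n. c i *\<^sub>R v i) = x}"
      using c by (auto simp: coord_feasible_def S_def PiE_def Pi_def)
  next
    fix c assume "c \<in> PiE UNIV S \<inter> {c. (\<Sum>i<n. c i) = 1} \<inter> {c. (\<Sum>i<n. c i *\<^sub>R v i) = x}"
    then show "c \<in> coord_feasible v n x"
      by (auto simp: coord_feasible_def S_def PiE_def Pi_def) (metis atLeastAtMost_iff, metis not_le singletonD)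
  qed
  show ?thesis unfolding eq
    using K c1 c2 by (intro closed_Int_compact compact_Int_closed) auto
qed

lemma gibbs_props:
  assumes ne: "coord_feasible v n x \<noteq> {}"
  shows "gibbs v n x \<in> coord_feasible v n x"
proof -
  let ?F = "coord_feasible v n x"
  have "continuous_on ?F (\<lambda>c. - (\<Sum>i<n. xlnx (c i)))"
    by (intro continuous_intros)
  then obtain q where q: "q \<in> ?F" "\<And>p. p \<in> ?F \<Longrightarrow> - (\<Sum>i<n. xlnx (p i)) \<le> - (\<Sum>i<n. xlnx (q i))"
    using continuous_attains_sup[OF compact_feasible ne] by blast
  have qmax: "\<forall>p\<in>?F. entropy n p \<le> entropy n q"
    using q by (simp add: entropy_feasible)
  have uniq: "p = q" if p: "p \<in> ?F" "\<forall>r\<in>?F. entropy n r \<le> entropy n p" for p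
  proof (rule ccontr)
    assume ne: "p \<noteq> q"
    then obtain i where i: "p i \<noteq> q i" by auto
    have "i < n"
    proof (rule ccontr)
      assume "\<not> i < n" then show False using i p(1) q(1) by (simp add: coord_feasible_def)
    qed
    define m where "m = (\<lambda>j. (p j + q j) / 2)"
    have pF: "(\<forall>i<n. 0 \<le> p i) \<and> (\<forall>i\<ge>n. p i = 0) \<and> (\<Sum>i<n. p i) = 1 \<and> (\<Sum>i<n. p i *\<^sub>R v i) = x"
      using p(1) by (simp add: coord_feasible_def)
    have qF: "(\<forall>i<n. 0 \<le> q i) \<and> (\<forall>i\<ge>n. q i = 0) \<and> (\<Sum>i<n. q i) = 1 \<and> (\<Sum>i<n. q i *\<^sub>R v i) = x"
      using q(1) by (simp add: coord_feasible_def)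
    have mF: "m \<in> ?F"
    proof -
      have pt: "m j *\<^sub>R v j = (1/2) *\<^sub>R (p j *\<^sub>R v j) + (1/2) *\<^sub>R (q j *\<^sub>R v j)" for j
        by (simp add: m_def add_divide_distrib scaleR_add_left)
      have "(\<Sum>j<n. m j *\<^sub>R v j) = (1/2) *\<^sub>R (\<Sum>j<n. p j *\<^sub>R v j) + (1/2) *\<^sub>R (\<Sum>j<n. q j *\<^sub>R v j)"
        unfolding pt by (simp add: sum.distrib scaleR_sum_right)
      also have "\<dots> = (1/2 + 1/2) *\<^sub>R x" using pF qF by (simp only: scaleR_add_left)
      finally have v: "(\<Sum>j<n. m j *\<^sub>R v j) = x" by simp
      have "(\<Sum>j<n. m j) = (\<Sum>j<n. p j) / 2 + (\<Sum>j<n. q j) / 2"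
        by (simp add: m_def add_divide_distrib sum.distrib sum_divide_distrib)
      then have s: "(\<Sum>j<n. m j) = 1" using pF qF by simp
      show ?thesis unfolding coord_feasible_def using v s pF qF by (simp add: m_def)
    qed
    have "(\<Sum>j<n. 2 * xlnx (m j)) < (\<Sum>j<n. xlnx (p j) + xlnx (q j))"
    proof (rule sum_strict_mono_ex1)
      show "\<forall>j\<in>{..<n}. 2 * xlnx (m j) \<le> xlnx (p j) + xlnx (q j)"
        using p(1) q(1) by (auto simp: m_def coord_feasible_def intro!: xlnx_mid_le)
      show "\<exists>j\<in>{..<n}. 2 * xlnx (m j) < xlnx (p j) + xlnx (q j)"
        using p(1) q(1) i \<open>i < n\<close> by (auto simp: m_def coord_feasible_def intro!: bexI[of _ i] xlnx_mid)
    qed simp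
    then have "2 * entropy n m > entropy n p + entropy n q"
      using entropy_feasible[OF p(1)] entropy_feasible[OF q(1)] entropy_feasible[OF mF]
      by (simp add: sum.distrib sum_distrib_left[symmetric])
    moreover have "entropy n p = entropy n q" using p qmax q(1) by (simp add: order_antisym)
    ultimately have "entropy n m > entropy n p" by simp
    moreover have "entropy n m \<le> entropy n p" using p(2) mF by blast
    ultimately show False by linarith
  qed
  have "gibbs v n x = q"
    unfolding gibbs_def
  proof (rule the_equality)
    show "q \<in> ?F \<and> (\<forall>p\<in>?F. entropy n p \<le> entropy n q)" using q(1) qmax by blast
    show "\<And>p. p \<in> ?F \<and> (\<forall>r\<in>?F. entropy n r \<le> entropy n p) \<Longrightarrow> p = q" using uniq by blast
  qed
  then show ?thesis using q(1) by simp
qed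



lemma tri_area_cyc: "tri_area p q r = tri_area q r p"
  unfolding tri_area_def by (simp add: algebra_simps)

lemma tri_area_affine:
  assumes "u + w = 1"
  shows "tri_area p q (u *\<^sub>R x + w *\<^sub>R y) = u * tri_area p q x + w * tri_area p q y"
proof -
  have w: "w = 1 - u" using assms by simp
  show ?thesis unfolding tri_area_def w by (simp add: algebra_simps divide_simps)
qed

lemma tri_area_same: "tri_area p p r = 0"
  unfolding tri_area_def by simp

lemma wach_core:
  fixes a b c y :: "real \<times> real"
  assumes "tri_area a b y \<noteq> 0" "tri_area b c y \<noteq> 0"
  shows "(tri_area a b c / (tri_area a b y * tri_area b c y)) *\<^sub>R (b - y)
          = (1 / tri_area b c y) *\<^sub>R (b - c) - (1 / tri_area a b y) *\<^sub>R (a - b)"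
proof -
  obtain a1 a2 where a: "a = (a1,a2)" by (cases a)
  obtain b1 b2 where b: "b = (b1,b2)" by (cases b)
  obtain c1 c2 where c: "c = (c1,c2)" by (cases c)
  obtain y1 y2 where y: "y = (y1,y2)" by (cases y)
  define A1 where "A1 = tri_area a b y"
  define A2 where "A2 = tri_area b c y"
  define C where "C = tri_area a b c"
  have e1: "C * (b1 - y1) = A1 * (b1 - c1) - A2 * (a1 - b1)"
    unfolding A1_def A2_def C_def a b c y tri_area_def by simp algebra
  have e2: "C * (b2 - y2) = A1 * (b2 - c2) - A2 * (a2 - b2)"
    unfolding A1_def A2_def C_def a b c y tri_area_def by simp algebra
  have n: "A1 \<noteq> 0" "A2 \<noteq> 0" using assms by (auto simp: A1_def A2_def)
  have "C / (A1 * A2) * (b1 - y1) = 1 / A2 * (b1 - c1) - 1 / A1 * (a1 - b1)"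
    using n e1 by (simp add: field_simps)
  moreover have "C / (A1 * A2) * (b2 - y2) = 1 / A2 * (b2 - c2) - 1 / A1 * (a2 - b2)"
    using n e2 by (simp add: field_simps)
  ultimately show ?thesis unfolding A1_def[symmetric] A2_def[symmetric] C_def[symmetric]
    unfolding a b c y by (simp add: prod_eq_iff)
qed

lemma nxt_lt: "0 < n \<Longrightarrow> nxt n i < n" by (simp add: nxt_def)
lemma prv_lt: "0 < n \<Longrightarrow> prv n i < n" by (simp add: prv_def)
lemma nxt_prv: "i < n \<Longrightarrow> nxt n (prv n i) = i"
  unfolding nxt_def prv_def
  by (cases i) (auto simp: mod_Suc Suc_diff_1 mod_if)
lemma prv_nxt: "i < n \<Longrightarrow> prv n (nxt n i) = i"
  unfolding nxt_def prv_def
  by (auto simp: mod_Suc mod_if)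
lemma nxt_neq: "1 < n \<Longrightarrow> i < n \<Longrightarrow> nxt n i \<noteq> i"
  unfolding nxt_def by (auto simp: mod_Suc mod_if)
lemma prv_neq: "1 < n \<Longrightarrow> i < n \<Longrightarrow> prv n i \<noteq> i"
  using nxt_prv nxt_neq by (metis prv_lt less_trans zero_less_one)
lemma prv_neq_nxt: "2 < n \<Longrightarrow> i < n \<Longrightarrow> prv n i \<noteq> nxt n i"
  unfolding nxt_def prv_def by (auto simp: mod_Suc mod_if split: if_splits)

lemma tri_area_sum:
  assumes "finite S" "sum u S = 1"
  shows "tri_area a b (\<Sum>p\<in>S. u p *\<^sub>R p) = (\<Sum>p\<in>S. u p * tri_area a b p)"
proof -
  define al where "al = (fst b - fst a) / 2"
  define be where "be = (snd b - snd a) / 2"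
  define K where "K = ((snd b - snd a) * fst a - (fst b - fst a) * snd a) / 2"
  have lin: "tri_area a b r = al * snd r - be * fst r + K" for r
    unfolding tri_area_def al_def be_def K_def by (simp add: algebra_simps divide_simps)
  have "(\<Sum>p\<in>S. u p * tri_area a b p) = al * (\<Sum>p\<in>S. u p * snd p) - be * (\<Sum>p\<in>S. u p * fst p) + K * (\<Sum>p\<in>S. u p)"
    unfolding lin by (simp add: algebra_simps sum.distrib sum_subtractf sum_distrib_left)
  then show ?thesis using assms unfolding lin by (simp add: fst_sum snd_sum)
qed

lemma edge_pos:
  assumes P: "ccw_convex_polygon v n" and "i < n" "j < n" "j \<noteq> i" "j \<noteq> nxt n i"
  shows "tri_area (v i) (v (nxt n i)) (v j) > 0"
  using assms unfolding ccw_convex_polygon_def by blast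

lemma P_n: "ccw_convex_polygon v n \<Longrightarrow> 3 \<le> n"
  unfolding ccw_convex_polygon_def by blast

lemma C_pos:
  assumes P: "ccw_convex_polygon v n" and i: "i < n"
  shows "tri_area (v (prv n i)) (v i) (v (nxt n i)) > 0"
proof -
  have n: "3 \<le> n" using P_n[OF P] .
  have "tri_area (v (prv n i)) (v (nxt n (prv n i))) (v (nxt n i)) > 0"
    by (rule edge_pos[OF P]) (use n i prv_lt[of n i] nxt_lt[of n i] prv_neq_nxt[of n i] nxt_prv[OF i] nxt_neq[of n i] in \<open>auto\<close>)
  then show ?thesis using nxt_prv[OF i] by simp
qed

lemma v_nxt_neq:
  assumes P: "ccw_convex_polygon v n" and i: "i < n"
  shows "v i \<noteq> v (nxt n i)"
proof
  assume eq: "v i = v (nxt n i)"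
  have n: "3 \<le> n" using P_n[OF P] .
  have "tri_area (v i) (v (nxt n i)) (v (prv n i)) > 0"
    by (rule edge_pos[OF P]) (use n i prv_lt[of n i] nxt_lt[of n i] prv_neq_nxt[of n i] prv_neq[of n i] in \<open>auto\<close>)
  then show False using eq by (simp add: tri_area_same)
qed

lemma hull_nonneg:
  assumes P: "ccw_convex_polygon v n" and y: "y \<in> polygon v n" and i: "i < n"
  shows "tri_area (v i) (v (nxt n i)) y \<ge> 0"
proof -
  have n: "3 \<le> n" using P_n[OF P] .
  have cv: "convex {y. tri_area (v i) (v (nxt n i)) y \<ge> 0}"
    unfolding convex_def by (auto simp: tri_area_affine)
  have "v ` {..<n} \<subseteq> {y. tri_area (v i) (v (nxt n i)) y \<ge> 0}"
  proof
    fix p assume "p \<in> v ` {..<n}"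
    then obtain j where j: "j < n" "p = v j" by auto
    show "p \<in> {y. tri_area (v i) (v (nxt n i)) y \<ge> 0}"
    proof (cases "j = i \<or> j = nxt n i")
      case True then show ?thesis using j by (auto simp: tri_area_def)
    next
      case False then show ?thesis using edge_pos[OF P i j(1)] j by fastforce
    qed
  qed
  then have "polygon v n \<subseteq> {y. tri_area (v i) (v (nxt n i)) y \<ge> 0}"
    unfolding polygon_def by (rule hull_minimal) (rule cv)
  then show ?thesis using y by auto
qed

lemma interior_pos:
  assumes P: "ccw_convex_polygon v n" and y: "y \<in> interior (polygon v n)" and i: "i < n"
  shows "tri_area (v i) (v (nxt n i)) y > 0"
proof (rule ccontr)
  assume neg: "\<not> ?thesis"
  have "y \<in> polygon v n" using y interior_subset by blast
  moreover have "tri_area (v i) (v (nxt n i)) y \<ge> 0" using hull_nonneg[OF P _ i] \<open>y \<in> polygon v n\<close> by blast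
  ultimately have z: "tri_area (v i) (v (nxt n i)) y = 0" using neg by linarith
  obtain e where e: "e > 0" "ball y e \<subseteq> polygon v n" using y mem_interior by blast
  define p where "p = v i"
  define q where "q = v (nxt n i)"
  have pq: "p \<noteq> q" using v_nxt_neq[OF P i] by (simp add: p_def q_def)
  define d where "d = (- (snd q - snd p), fst q - fst p)"
  define N where "N = norm d"
  have N: "N \<ge> 0" unfolding N_def by simp
  define t where "t = e / (2 * (N + 1))"
  have D: "0 < 2 * (N + 1)" using N by simp
  have t: "t > 0" using e D unfolding t_def by (intro divide_pos_pos)
  have "e * N < e * (2 * (N + 1))" using e N by (intro mult_strict_left_mono) auto
  then have "t * N < e" using D unfolding t_def by (simp add: pos_divide_less_eq)
  then have "dist y (y - t *\<^sub>R d) < e" using t by (simp add: dist_norm N_def)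
  then have "y - t *\<^sub>R d \<in> ball y e" by simp
  then have "y - t *\<^sub>R d \<in> polygon v n" using e by blast
  then have ge: "tri_area p q (y - t *\<^sub>R d) \<ge> 0" using hull_nonneg[OF P _ i] by (simp add: p_def q_def)
  have sq: "(fst q - fst p)^2 + (snd q - snd p)^2 > 0"
    using pq by (auto simp: sum_power2_gt_zero_iff prod_eq_iff)
  have "tri_area p q (y - t *\<^sub>R d) = tri_area p q y - t * ((fst q - fst p)^2 + (snd q - snd p)^2) / 2"
    unfolding tri_area_def d_def power2_eq_square by (simp add: field_simps; algebra)
  also have "\<dots> < 0" using z t sq by (simp add: p_def q_def)
  finally show False using ge by simp
qed

lemma prv_bij:
  assumes "0 < n"
  shows "(\<Sum>i<n. f (prv n i)) = (\<Sum>i<n. (f i :: 'a :: comm_monoid_add))"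
proof -
  have inj: "inj_on (prv n) {..<n}"
    by (metis inj_onI lessThan_iff nxt_prv)
  have im: "prv n ` {..<n} = {..<n}"
  proof
    show "prv n ` {..<n} \<subseteq> {..<n}" using prv_lt[OF assms] by auto
    show "{..<n} \<subseteq> prv n ` {..<n}"
    proof
      fix i assume "i \<in> {..<n}"
      then have "i = prv n (nxt n i)" "nxt n i \<in> {..<n}" using prv_nxt nxt_lt[OF assms] by auto
      then show "i \<in> prv n ` {..<n}" by blast
    qed
  qed
  show ?thesis using sum.reindex[OF inj, of f] im by simp
qed

lemma wach_id:
  assumes n: "0 < n" and nz: "\<forall>i<n. tri_area (v i) (v (nxt n i)) y \<noteq> 0"
  shows "(\<Sum>i<n. wach_weight v n y i *\<^sub>R (v i - y)) = 0"
proof -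
  define r where "r k = (1 / tri_area (v k) (v (nxt n k)) y) *\<^sub>R (v k - v (nxt n k))" for k
  have each: "wach_weight v n y i *\<^sub>R (v i - y) = r i - r (prv n i)" if i: "i < n" for i
  proof -
    have np: "nxt n (prv n i) = i" using nxt_prv[OF i] .
    have a1: "tri_area (v (prv n i)) (v i) y \<noteq> 0" using nz prv_lt[OF n, of i] np by metis
    have a2: "tri_area (v i) (v (nxt n i)) y \<noteq> 0" using nz i by blast
    have "wach_weight v n y i = tri_area (v (prv n i)) (v i) (v (nxt n i)) /
            (tri_area (v (prv n i)) (v i) y * tri_area (v i) (v (nxt n i)) y)"
      unfolding wach_weight_def using tri_area_cyc[of y "v i" "v (nxt n i)"] by simp
    then show ?thesis using wach_core[OF a1 a2] unfolding r_def np by simp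
  qed
  have "(\<Sum>i<n. wach_weight v n y i *\<^sub>R (v i - y)) = (\<Sum>i<n. r i - r (prv n i))"
    using each by simp
  also have "\<dots> = 0" by (simp add: sum_subtractf prv_bij[OF n])
  finally show ?thesis .
qed

lemma ww_pos:
  assumes P: "ccw_convex_polygon v n" and pos: "\<forall>i<n. tri_area (v i) (v (nxt n i)) y > 0" and i: "i < n"
  shows "wach_weight v n y i > 0"
proof -
  have n: "0 < n" using P_n[OF P] by simp
  have np: "nxt n (prv n i) = i" using nxt_prv[OF i] .
  have a1: "tri_area (v (prv n i)) (v i) y > 0" using pos prv_lt[OF n, of i] np by metis
  have a2: "tri_area y (v i) (v (nxt n i)) > 0" using pos i tri_area_cyc[of y "v i" "v (nxt n i)"] by simp
  show ?thesis unfolding wach_weight_def using C_pos[OF P i] a1 a2 by simp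
qed

lemma wach_sum:
  assumes P: "ccw_convex_polygon v n" and pos: "\<forall>i<n. tri_area (v i) (v (nxt n i)) y > 0"
  defines "W \<equiv> (\<Sum>j<n. wach_weight v n y j)"
  shows "W > 0" "(\<Sum>i<n. wach_weight v n y i *\<^sub>R v i) = W *\<^sub>R y"
proof -
  have n: "0 < n" using P_n[OF P] by simp
  show "W > 0" unfolding W_def using ww_pos[OF P pos] n by (intro sum_pos) auto
  have "0 = (\<Sum>i<n. wach_weight v n y i *\<^sub>R (v i - y))"
    using wach_id[OF n] pos by (metis less_irrefl)
  also have "\<dots> = (\<Sum>i<n. wach_weight v n y i *\<^sub>R v i) - W *\<^sub>R y"
    by (simp add: scaleR_diff_right sum_subtractf W_def scaleR_sum_left)
  finally show "(\<Sum>i<n. wach_weight v n y i *\<^sub>R v i) = W *\<^sub>R y" by simp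
qed

lemma pos_in_hull:
  assumes P: "ccw_convex_polygon v n" and pos: "\<forall>i<n. tri_area (v i) (v (nxt n i)) y > 0"
  shows "y \<in> polygon v n"
proof -
  define W where "W = (\<Sum>j<n. wach_weight v n y j)"
  have W: "W > 0" "(\<Sum>i<n. wach_weight v n y i *\<^sub>R v i) = W *\<^sub>R y"
    using wach_sum[OF P pos] by (simp_all add: W_def)
  have "(\<Sum>i<n. (wach_weight v n y i / W) *\<^sub>R v i) = (1/W) *\<^sub>R (\<Sum>i<n. wach_weight v n y i *\<^sub>R v i)"
    by (simp add: scaleR_sum_right)
  also have "\<dots> = y" using W by simp
  finally have eq: "(\<Sum>i<n. (wach_weight v n y i / W) *\<^sub>R v i) = y" .
  have "(\<Sum>i<n. (wach_weight v n y i / W) *\<^sub>R v i) \<in> polygon v n"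
  proof (rule convex_sum)
    show "convex (polygon v n)" unfolding polygon_def by simp
    show "(\<Sum>i<n. wach_weight v n y i / W) = 1" using W by (simp add: sum_divide_distrib[symmetric] W_def)
    show "\<And>i. i \<in> {..<n} \<Longrightarrow> 0 \<le> wach_weight v n y i / W" using ww_pos[OF P pos] W by (simp add: less_imp_le)
    show "\<And>i. i \<in> {..<n} \<Longrightarrow> v i \<in> polygon v n" unfolding polygon_def by (simp add: hull_inc)
  qed simp
  then show ?thesis using eq by simp
qed

lemma edge_zero_segment:
  assumes P: "ccw_convex_polygon v n" and y: "y \<in> polygon v n" and j: "j < n"
    and z: "tri_area (v j) (v (nxt n j)) y = 0"
  shows "y \<in> closed_segment (v j) (v (nxt n j))"
proof -
  have n: "3 \<le> n" using P_n[OF P] .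
  define S where "S = v ` {..<n}"
  define a where "a = v j"
  define b where "b = v (nxt n j)"
  have ab: "a \<noteq> b" using v_nxt_neq[OF P j] by (simp add: a_def b_def)
  have fS: "finite S" by (simp add: S_def)
  have abS: "{a, b} \<subseteq> S" using j nxt_lt[of n j] n by (auto simp: S_def a_def b_def)
  obtain u where u: "\<forall>p\<in>S. 0 \<le> u p" "sum u S = 1" "(\<Sum>p\<in>S. u p *\<^sub>R p) = y"
  proof -
    have "y \<in> convex hull S" using y by (simp add: polygon_def S_def)
    then show ?thesis using that unfolding convex_hull_finite[OF fS] by auto
  qed
  have nn: "\<forall>p\<in>S. 0 \<le> u p * tri_area a b p"
  proof
    fix p assume p: "p \<in> S"
    have "tri_area a b p \<ge> 0" using hull_nonneg[OF P _ j, of p] p unfolding S_def polygon_def a_def b_def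
      by (simp add: hull_inc)
    then show "0 \<le> u p * tri_area a b p" using u(1) p by simp
  qed
  have "(\<Sum>p\<in>S. u p * tri_area a b p) = 0"
    using tri_area_sum[OF fS u(2), of a b] u(3) z by (simp add: a_def b_def)
  then have zero: "\<forall>p\<in>S. u p * tri_area a b p = 0"
    using sum_nonneg_eq_0_iff[OF fS, of "\<lambda>p. u p * tri_area a b p"] nn by simp
  have u0: "u p = 0" if p: "p \<in> S - {a, b}" for p
  proof -
    obtain k where k: "k < n" "p = v k" using p by (auto simp: S_def)
    have "k \<noteq> j" "k \<noteq> nxt n j" using p k by (auto simp: a_def b_def)
    then have "tri_area a b p > 0" using edge_pos[OF P j k(1)] k by (simp add: a_def b_def)
    then show ?thesis using zero p by auto
  qed
  have s1: "sum u S = sum u {a, b}" by (rule sum.mono_neutral_right[OF fS abS]) (use u0 in auto)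
  have s2: "(\<Sum>p\<in>S. u p *\<^sub>R p) = (\<Sum>p\<in>{a,b}. u p *\<^sub>R p)"
    by (rule sum.mono_neutral_right[OF fS abS]) (use u0 in auto)
  have e1: "u a + u b = 1" using s1 u(2) ab by simp
  have e2: "y = u a *\<^sub>R a + u b *\<^sub>R b" using s2 u(3) ab by simp
  have "u a \<ge> 0" "u b \<ge> 0" using u(1) abS by auto
  moreover have ua: "u a = 1 - u b" using e1 by simp
  ultimately have "y = (1 - u b) *\<^sub>R a + u b *\<^sub>R b \<and> 0 \<le> u b \<and> u b \<le> 1"
    using e2 by simp
  then show ?thesis unfolding closed_segment_def a_def b_def by blast
qed

lemma open_pos: "open {y. \<forall>i<n. tri_area (v i) (v (nxt n i)) y > 0}"
proof -
  have "{y. \<forall>i<n. tri_area (v i) (v (nxt n i)) y > 0} = (\<Inter>i\<in>{..<n}. {y. tri_area (v i) (v (nxt n i)) y > 0})"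
    by auto
  moreover have "open {y. tri_area (v i) (v (nxt n i)) y > 0}" for i
    unfolding tri_area_def by (intro open_Collect_less continuous_intros) auto
  ultimately show ?thesis by (auto intro!: open_INT)
qed

lemma boundary_edge:
  assumes P: "ccw_convex_polygon v n" and y: "y \<in> polygon v n" and ni: "y \<notin> interior (polygon v n)"
  shows "\<exists>j<n. y \<in> closed_segment (v j) (v (nxt n j))"
proof -
  have "{y. \<forall>i<n. tri_area (v i) (v (nxt n i)) y > 0} \<subseteq> interior (polygon v n)"
    using pos_in_hull[OF P] open_pos by (intro interior_maximal) auto
  then obtain j where j: "j < n" "\<not> tri_area (v j) (v (nxt n j)) y > 0" using ni by blast
  then have "tri_area (v j) (v (nxt n j)) y = 0" using hull_nonneg[OF P y j(1)] by linarith
  then show ?thesis using edge_zero_segment[OF P y j(1)] j(1) by blast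
qed



lemma sum_fun_apply: "(\<Sum>x\<in>A. F x) (i::nat) = (\<Sum>x\<in>A. F x i :: real)"
  by (induction A rule: infinite_finite_induct) (auto simp: zero_fun_def plus_fun_def)

lemma fun_scaleR_apply: "(c *\<^sub>R (f :: nat \<Rightarrow> real)) i = c * f i"
  by (simp add: scaleR_fun_def)

lemma LA:
  fixes u :: "nat \<Rightarrow> real \<times> real" and m :: nat
  assumes m: "2 \<le> m" and ind: "fst (u 0) * snd (u 1) - snd (u 0) * fst (u 1) \<noteq> 0"
  defines "S \<equiv> {f. f \<in> Rn m \<and> (\<Sum>i<m. f i *\<^sub>R u i) = 0}"
  shows "subspace S" "dim S = m - 2"
proof -
  have sc: "(\<Sum>i<m. (c * x i) *\<^sub>R u i) = c *\<^sub>R (\<Sum>i<m. x i *\<^sub>R u i)" for c and x :: "nat \<Rightarrow> real"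
    by (simp add: scaleR_sum_right)
  show sub: "subspace S"
    unfolding subspace_def S_def Rn_def
    by (auto simp: zero_fun_def plus_fun_def scaleR_fun_def scaleR_add_left sum.distrib sc)
  define cr where "cr a b = fst a * snd b - snd a * fst b" for a b :: "real \<times> real"
  define \<delta> where "\<delta> = cr (u 0) (u 1)"
  have \<delta>: "\<delta> \<noteq> 0" using ind by (simp add: \<delta>_def cr_def)
  define al where "al k = cr (u k) (u 1) / \<delta>" for k
  define be where "be k = cr (u 0) (u k) / \<delta>" for k
  have cram: "u k = al k *\<^sub>R u 0 + be k *\<^sub>R u 1" for k
  proof -
    have "\<delta> * fst (u k) = cr (u k) (u 1) * fst (u 0) + cr (u 0) (u k) * fst (u 1)"
      "\<delta> * snd (u k) = cr (u k) (u 1) * snd (u 0) + cr (u 0) (u k) * snd (u 1)"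
      unfolding \<delta>_def cr_def by algebra+
    then show ?thesis using \<delta> unfolding al_def be_def by (simp add: prod_eq_iff field_simps)
  qed
  define b where "b k = (\<lambda>i. (if i = k then 1 else 0) - (if i = 0 then al k else 0) - (if i = 1 then be k else 0) :: real)" for k
  define K where "K = {2..<m}"
  define B where "B = b ` K"
  have bk: "b k k = 1" if "k \<in> K" for k using that by (auto simp: b_def K_def)
  have bk': "b k' k = 0" if "k \<in> K" "k' \<in> K" "k' \<noteq> k" for k k' using that by (auto simp: b_def K_def)
  have binj: "inj_on b K"
  proof (rule inj_onI)
    fix k k' assume "k \<in> K" "k' \<in> K" "b k = b k'"
    then show "k = k'" using bk bk' by (metis zero_neq_one)
  qed
  have bS: "b k \<in> S" if k: "k \<in> K" for k
  proof -
    have k0: "k \<noteq> 0" "k \<noteq> 1" "k < m" using k by (auto simp: K_def)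
    have "b k \<in> Rn m" using k0 by (auto simp: Rn_def b_def)
    moreover have "(\<Sum>i<m. b k i *\<^sub>R u i) = 0"
    proof -
      have pt: "b k i *\<^sub>R u i = (if i = k then u k else 0) - (if i = 0 then al k *\<^sub>R u 0 else 0)
                  - (if i = 1 then be k *\<^sub>R u 1 else 0)" for i
        using k0 by (auto simp: b_def)
      have "(\<Sum>i<m. b k i *\<^sub>R u i) = u k - al k *\<^sub>R u 0 - be k *\<^sub>R u 1"
        unfolding pt using k0 m by (simp add: sum_subtractf)
      then show ?thesis using cram[of k] by simp
    qed
    ultimately show ?thesis by (simp add: S_def)
  qed
  have BS: "B \<subseteq> S" using bS by (auto simp: B_def)
  have finB: "finite B" by (simp add: B_def K_def)
  have indep: "independent B"
    unfolding independent_explicit_finite_subsets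
  proof (intro allI impI ballI)
    fix T c w assume T: "T \<subseteq> B" "finite T" and sum0: "(\<Sum>v\<in>T. c v *\<^sub>R v) = 0" and w: "w \<in> T"
    obtain k where k: "k \<in> K" "w = b k" using w T by (auto simp: B_def)
    have "0 = (\<Sum>v\<in>T. c v *\<^sub>R v) k" using sum0 by (simp add: zero_fun_def)
    also have "\<dots> = (\<Sum>v\<in>T. c v * v k)" by (simp add: sum_fun_apply fun_scaleR_apply)
    also have "\<dots> = (\<Sum>v\<in>T. if v = w then c w else 0)"
    proof (rule sum.cong)
      fix v assume v: "v \<in> T"
      then obtain k' where k': "k' \<in> K" "v = b k'" using T by (auto simp: B_def)
      show "c v * v k = (if v = w then c w else 0)"
        using bk[OF k(1)] bk'[OF k(1) k'(1)] k k' by auto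
    qed simp
    also have "\<dots> = c w" using w T by simp
    finally show "c w = 0" by simp
  qed
  have span: "S \<subseteq> span B"
  proof
    fix f assume f: "f \<in> S"
    define h where "h = (\<Sum>k\<in>K. f k *\<^sub>R b k)"
    have hB: "h \<in> span B" unfolding h_def B_def
      by (intro span_sum span_scale span_base) auto
    have hS: "h \<in> S" unfolding h_def
      by (intro subspace_sum[OF sub] subspace_scale[OF sub] bS)
    define g where "g = f - h"
    have gS: "g \<in> S" unfolding g_def using subspace_diff[OF sub f hS] .
    have hi: "h i = (\<Sum>k\<in>K. f k * b k i)" for i
      by (simp add: h_def sum_fun_apply fun_scaleR_apply)
    have gz: "g i = 0" if "i \<noteq> 0" "i \<noteq> 1" for i
    proof (cases "i \<in> K")
      case True
      have "h i = (\<Sum>k\<in>K. if k = i then f i else 0)"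
        unfolding hi using bk[OF True] bk'[OF True] by (intro sum.cong) auto
      then show ?thesis using True by (simp add: g_def K_def)
    next
      case False
      then have "i \<ge> m" using that by (auto simp: K_def)
      moreover have "b k i = 0" if "k \<in> K" for k using that \<open>i \<ge> m\<close> \<open>i \<noteq> 0\<close> \<open>i \<noteq> 1\<close>
        by (auto simp: b_def K_def)
      ultimately show ?thesis using f unfolding g_def hi by (simp add: S_def Rn_def)
    qed
    have "(\<Sum>i<m. g i *\<^sub>R u i) = 0" using gS by (simp add: S_def)
    moreover have "(\<Sum>i<m. g i *\<^sub>R u i) = (\<Sum>i\<in>{0,1}. g i *\<^sub>R u i)"
      by (rule sum.mono_neutral_right) (use m gz in auto)
    ultimately have e: "g 0 *\<^sub>R u 0 + g 1 *\<^sub>R u 1 = 0" by simp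
    have "g 0 * \<delta> = 0" "g 1 * \<delta> = 0"
    proof -
      have "fst (g 0 *\<^sub>R u 0 + g 1 *\<^sub>R u 1) * snd (u 1) - snd (g 0 *\<^sub>R u 0 + g 1 *\<^sub>R u 1) * fst (u 1) = 0"
        "fst (u 0) * snd (g 0 *\<^sub>R u 0 + g 1 *\<^sub>R u 1) - snd (u 0) * fst (g 0 *\<^sub>R u 0 + g 1 *\<^sub>R u 1) = 0"
        using e by simp_all
      then show "g 0 * \<delta> = 0" "g 1 * \<delta> = 0" unfolding \<delta>_def cr_def by (simp_all add: algebra_simps)
    qed
    then have "g 0 = 0" "g 1 = 0" using \<delta> by simp_all
    then have "g = 0" unfolding zero_fun_def
    proof (intro ext)
      fix i show "g i = 0" using gz \<open>g 0 = 0\<close> \<open>g 1 = 0\<close> by (cases "i = 0 \<or> i = 1") auto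
    qed
    then have "f = h" by (simp add: g_def)
    then show "f \<in> span B" using hB by simp
  qed
  have "span B = S" by (rule span_subspace[OF BS span sub])
  then have "dim S = card B" using dim_span[of B] dim_eq_card_independent[OF indep] by simp
  also have "\<dots> = card K" unfolding B_def by (rule card_image[OF binj])
  also have "\<dots> = m - 2" by (simp add: K_def)
  finally show "dim S = m - 2" .
qed


lemma two_point:
  fixes v :: "nat \<Rightarrow> real \<times> real"
  assumes "j < n" "k < n" "j \<noteq> k"
  shows "(\<Sum>i<n. (if i = j then a else if i = k then b else 0)) = a + b"
    "(\<Sum>i<n. (if i = j then a else if i = k then b else 0) *\<^sub>R v i) = a *\<^sub>R v j + b *\<^sub>R v k"
proof -
  have e: "(if i = j then a else if i = k then b else 0) = (if i = j then a else 0) + (if i = k then b else (0::real))" for i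
    using assms(3) by auto
  show "(\<Sum>i<n. (if i = j then a else if i = k then b else 0)) = a + b"
    unfolding e using assms by (simp add: sum.distrib)
  have e2: "(if i = j then a else if i = k then b else 0) *\<^sub>R v i = (if i = j then a *\<^sub>R v j else 0) + (if i = k then b *\<^sub>R v k else 0)" for i
    using assms(3) by auto
  show "(\<Sum>i<n. (if i = j then a else if i = k then b else 0) *\<^sub>R v i) = a *\<^sub>R v j + b *\<^sub>R v k"
    unfolding e2 using assms by (simp add: sum.distrib)
qed

lemma wach_feasible:
  assumes P: "ccw_convex_polygon v n" and x: "x \<in> polygon v n"
  shows "wachspress v n x \<in> coord_feasible v n x"
proof (cases "x \<in> interior (polygon v n)")
  case True
  have pos: "\<forall>i<n. tri_area (v i) (v (nxt n i)) x > 0" using interior_pos[OF P True] by blast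
  define W where "W = (\<Sum>j<n. wach_weight v n x j)"
  have W: "W > 0" "(\<Sum>i<n. wach_weight v n x i *\<^sub>R v i) = W *\<^sub>R x"
    using wach_sum[OF P pos] by (simp_all add: W_def)
  have eq: "wachspress v n x = (\<lambda>i. if i < n then wach_weight v n x i / W else 0)"
    unfolding W_def wachspress_def using True by simp
  have s1: "(\<Sum>i<n. (if i < n then wach_weight v n x i / W else 0)) = 1"
    using W by (simp add: sum_divide_distrib[symmetric] W_def)
  have "(\<Sum>i<n. (if i < n then wach_weight v n x i / W else 0) *\<^sub>R v i)
      = (1/W) *\<^sub>R (\<Sum>i<n. wach_weight v n x i *\<^sub>R v i)"
    by (simp add: scaleR_sum_right)
  also have "\<dots> = x" using W by simp
  finally have s2: "(\<Sum>i<n. (if i < n then wach_weight v n x i / W else 0) *\<^sub>R v i) = x" .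
  show ?thesis unfolding eq coord_feasible_def
    using s1 s2 ww_pos[OF P pos] W by (auto simp: less_imp_le)
next
  case False
  have n: "3 \<le> n" using P_n[OF P] .
  define j where "j = (SOME j. j < n \<and> x \<in> closed_segment (v j) (v (nxt n j)))"
  have j: "j < n \<and> x \<in> closed_segment (v j) (v (nxt n j))"
    unfolding j_def by (rule someI_ex) (rule boundary_edge[OF P x False])
  then obtain t0 where t0: "0 \<le> t0" "t0 \<le> 1" "x = (1 - t0) *\<^sub>R v j + t0 *\<^sub>R v (nxt n j)"
    unfolding closed_segment_def by blast
  have ne: "v j \<noteq> v (nxt n j)" using v_nxt_neq[OF P] j by blast
  have the: "(THE t. 0 \<le> t \<and> t \<le> 1 \<and> x = (1 - t) *\<^sub>R v j + t *\<^sub>R v (nxt n j)) = t0"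
  proof (rule the_equality)
    show "0 \<le> t0 \<and> t0 \<le> 1 \<and> x = (1 - t0) *\<^sub>R v j + t0 *\<^sub>R v (nxt n j)" using t0 by blast
    fix t assume t: "0 \<le> t \<and> t \<le> 1 \<and> x = (1 - t) *\<^sub>R v j + t *\<^sub>R v (nxt n j)"
    have r: "(1 - s) *\<^sub>R v j + s *\<^sub>R v (nxt n j) = v j + s *\<^sub>R (v (nxt n j) - v j)" for s
      by (simp add: algebra_simps)
    have "t *\<^sub>R (v (nxt n j) - v j) = t0 *\<^sub>R (v (nxt n j) - v j)"
      using t t0(3) unfolding r by (metis add_left_cancel)
    then show "t = t0" using ne by auto
  qed
  have eq: "wachspress v n x = (\<lambda>k. if k = j then 1 - t0 else if k = nxt n j then t0 else 0)"
    using False unfolding wachspress_def wach_boundary_def Let_def j_def[symmetric] the by simp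
  have jn: "j < n" "nxt n j < n" "j \<noteq> nxt n j" using j nxt_lt[of n j] nxt_neq[of n j] n by auto
  show ?thesis unfolding eq coord_feasible_def
    using two_point(1)[OF jn, where a="1 - t0" and b=t0] two_point(2)[OF jn, where a="1 - t0" and b=t0 and v=v] t0 jn by auto
qed

theorem proposition5p8:
  fixes v :: "nat \<Rightarrow> real \<times> real" and n :: nat
  assumes "ccw_convex_polygon v n"
  shows "\<exists>S :: (nat \<Rightarrow> real) set. subspace S \<and> S \<subseteq> Rn (n - 1) \<and> dim S = n - 3
           \<and> (\<forall>x \<in> polygon v n. gw_discrepancy v n x \<in> S)"
proof -
  note P = assms
  have n: "3 \<le> n" using P_n[OF P] .
  define m where "m = n - 1"
  have m: "2 \<le> m" "n = Suc m" using n by (auto simp: m_def)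
  define u where "u i = v i - v m" for i
  have nx: "nxt n m = 0" using m by (simp add: nxt_def)
  have "tri_area (v m) (v (nxt n m)) (v 1) > 0"
    by (rule edge_pos[OF P]) (use m nx in auto)
  then have "tri_area (v m) (v 0) (v 1) > 0" using nx by simp
  then have ind: "fst (u 0) * snd (u 1) - snd (u 0) * fst (u 1) \<noteq> 0"
    unfolding u_def tri_area_def by simp
  define S where "S = {f. f \<in> Rn m \<and> (\<Sum>i<m. f i *\<^sub>R u i) = 0}"
  have sub: "subspace S" and dS: "dim S = m - 2" using LA[OF m(1) ind] by (simp_all add: S_def)
  have mem: "gw_discrepancy v n x \<in> S" if x: "x \<in> polygon v n" for x
  proof -
    have wF: "wachspress v n x \<in> coord_feasible v n x" by (rule wach_feasible[OF P x])
    then have gF: "gibbs v n x \<in> coord_feasible v n x" by (intro gibbs_props) blast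
    define d where "d i = gibbs v n x i - wachspress v n x i" for i
    have s1: "(\<Sum>i<n. d i) = 0" using wF gF by (simp add: d_def sum_subtractf coord_feasible_def)
    have s2: "(\<Sum>i<n. d i *\<^sub>R v i) = 0"
      using wF gF by (simp add: d_def sum_subtractf coord_feasible_def scaleR_diff_left)
    have "(\<Sum>i<n. d i *\<^sub>R u i) = (\<Sum>i<n. d i *\<^sub>R v i) - (\<Sum>i<n. d i) *\<^sub>R v m"
      by (simp add: u_def scaleR_diff_right sum_subtractf scaleR_sum_left)
    also have "\<dots> = 0" using s1 s2 by simp
    finally have "(\<Sum>i<n. d i *\<^sub>R u i) = 0" .
    then have s3: "(\<Sum>i<m. d i *\<^sub>R u i) = 0" using m(2) by (simp add: u_def)
    have "(\<Sum>i<m. gw_discrepancy v n x i *\<^sub>R u i) = (\<Sum>i<m. d i *\<^sub>R u i)"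
      by (rule sum.cong) (auto simp: gw_discrepancy_def d_def m_def)
    then show ?thesis using s3 by (simp add: S_def Rn_def gw_discrepancy_def m_def)
  qed
  show ?thesis
    by (rule exI[of _ S]) (use sub dS mem n in \<open>auto simp: S_def m_def\<close>)
qed

end
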